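(* Let $U\le\mathbb{F}_q^k$ be a subspace with $\dim U=k-\ell$, and let $\mathcal{P}=\{x+U:x\in\mathbb{F}_q^k\}$ be its coset partition. If $$\big|\{e_i+U:\ i\in[k],\ e_i\notin U\}\big|=\ell,$$ where $e_i$ is the $i$-th standard basis vector, then the partition graph $G_{\mathcal{P}}$ contains a clique of size $q^{\ell}$ (i.e., containing exactly one vector from each coset of $U$).
   Context: $d$ is Hamming distance; for distinct blocks $d(P,P')=\min_{u\in P,v\in P'}d(u,v)$. The partition graph $G_{\mathcal{P}}$ of a partition $\mathcal{P}$ of $\mathbb{F}_q^k$ has vertex set $\mathbb{F}_q^k$, and vertices $u\in P$, $v\in P'$ (blocks of $\mathcal{P}$) are adjacent iff $P\ne P'$ and $d(u,v)=d(P,P')$. *)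

theory Defs
  imports "HOL-Analysis.Analysis"
begin

text \<open>Vectors of F_q^k are modelled as 'a ^ 'n with 'a a finite field
  (q = CARD('a)) and 'n a finite index type (k = CARD('n)).\<close>

definition hamming :: "'a ^ 'n \<Rightarrow> 'a ^ 'n \<Rightarrow> nat" where
  "hamming u v = card {i. u $ i \<noteq> v $ i}"

definition block_dist :: "('a ^ 'n) set \<Rightarrow> ('a ^ 'n) set \<Rightarrow> nat" where
  "block_dist P P' = Min {hamming u v | u v. u \<in> P \<and> v \<in> P'}"

definition partition_graph_adj :: "('a ^ 'n) set set \<Rightarrow> 'a ^ 'n \<Rightarrow> 'a ^ 'n \<Rightarrow> bool" where
  "partition_graph_adj \<P> u v \<longleftrightarrow>
     (\<exists>P\<in>\<P>. \<exists>P'\<in>\<P>. P \<noteq> P' \<and> u \<in> P \<and> v \<in> P' \<and> hamming u v = block_dist P P')"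

definition is_clique :: "('a \<Rightarrow> 'a \<Rightarrow> bool) \<Rightarrow> 'a set \<Rightarrow> bool" where
  "is_clique E C \<longleftrightarrow> (\<forall>u\<in>C. \<forall>v\<in>C. u \<noteq> v \<longrightarrow> E u v)"

definition coset :: "'a ^ 'n \<Rightarrow> ('a::ab_group_add ^ 'n) set \<Rightarrow> ('a ^ 'n) set" where
  "coset x U = (\<lambda>u. x + u) ` U"

definition coset_partition :: "('a::ab_group_add ^ 'n) set \<Rightarrow> ('a ^ 'n) set set" where
  "coset_partition U = {coset x U | x. True}"

definition std_basis :: "'n \<Rightarrow> 'a::field ^ 'n" where
  "std_basis i = axis i 1"

end

theory Submission
  imports Defs
begin

lemma mem_coset_iff:
  assumes "vec.subspace U"
  shows "y \<in> coset x U \<longleftrightarrow> y - x \<in> U"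
proof
  assume "y \<in> coset x U"
  then obtain u where "u \<in> U" "y = x + u" unfolding coset_def by auto
  then show "y - x \<in> U" by simp
next
  assume "y - x \<in> U"
  then have "y = x + (y - x)" "y - x \<in> U" by simp_all
  then show "y \<in> coset x U" unfolding coset_def by blast
qed

lemma coset_eq_diff:
  assumes "vec.subspace U" "coset x U = coset y U"
  shows "x - y \<in> U"
proof -
  have "x \<in> coset x U" using mem_coset_iff[OF assms(1)] vec.subspace_0[OF assms(1)] by simp
  then show ?thesis using assms mem_coset_iff[OF assms(1)] by simp
qed

theorem lemma6:
  fixes U :: "('a::{finite,field} ^ 'n::finite) set" and l :: nat
  assumes "vec.subspace U"
    and "vec.dim U + l = CARD('n)"
    and "card {coset (std_basis i) U | i. std_basis i \<notin> U} = l"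
  shows "\<exists>C. is_clique (partition_graph_adj (coset_partition U)) C
              \<and> card C = CARD('a) ^ l
              \<and> (\<forall>P\<in>coset_partition U. card (C \<inter> P) = 1)"
proof -
  note sU = assms(1)
  define e :: "'n \<Rightarrow> 'a ^ 'n" where "e = std_basis"
  have e_comp: "e i $ j = (if j = i then 1 else 0)" for i j
    unfolding e_def std_basis_def axis_def by simp
  define Q where "Q = {coset (e i) U | i. e i \<notin> U}"
  define rep where "rep q = (SOME i. e i \<notin> U \<and> coset (e i) U = q)" for q
  have rep: "e (rep q) \<notin> U \<and> coset (e (rep q)) U = q" if "q \<in> Q" for q
  proof -
    from that obtain i where "e i \<notin> U \<and> coset (e i) U = q" unfolding Q_def by blast
    then show ?thesis unfolding rep_def by (rule someI)
  qed
  define I where "I = rep ` Q"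
  have injrep: "inj_on rep Q" by (metis inj_onI rep)
  have "Q = {coset (std_basis i) U | i. std_basis i \<notin> U}" unfolding Q_def e_def by simp
  then have "card Q = l" using assms(3) by simp
  then have cardI: "card I = l" unfolding I_def using card_image[OF injrep] by simp
  define J where "J = {j. e j \<notin> U}"
  define \<sigma> where "\<sigma> j = rep (coset (e j) U)" for j
  have sigI: "\<sigma> j \<in> I" and sigU: "e j - e (\<sigma> j) \<in> U" if "j \<in> J" for j
  proof -
    have q: "coset (e j) U \<in> Q" using that unfolding Q_def J_def by blast
    then show "\<sigma> j \<in> I" unfolding I_def \<sigma>_def by blast
    show "e j - e (\<sigma> j) \<in> U" using rep[OF q] coset_eq_diff[OF sU] unfolding \<sigma>_def by metis
  qed
  define C where "C = {x :: 'a ^ 'n. \<forall>i. i \<notin> I \<longrightarrow> x $ i = 0}"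
  have sC: "vec.subspace C" unfolding vec.subspace_def C_def by simp
  have C_span: "C = vec.span (e ` I)"
  proof
    show "vec.span (e ` I) \<subseteq> C"
      by (rule vec.span_minimal[OF _ sC]) (auto simp: C_def e_comp)
    show "C \<subseteq> vec.span (e ` I)"
    proof
      fix x assume x: "x \<in> C"
      have "x = (\<Sum>i\<in>UNIV. x $ i *s e i)" using basis_expansion[of x] unfolding e_def std_basis_def by simp
      also have "\<dots> = (\<Sum>i\<in>I. x $ i *s e i)"
        by (rule sum.mono_neutral_right) (use x in \<open>auto simp: C_def\<close>)
      also have "\<dots> \<in> vec.span (e ` I)"
        by (intro vec.span_sum vec.span_scale vec.span_base) auto
      finally show "x \<in> vec.span (e ` I)" .
    qed
  qed
  have inje: "inj e" unfolding e_def std_basis_def by (auto simp: inj_on_def axis_eq_axis)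
  have indep: "vec.independent (e ` I)"
    by (rule vec.independent_mono[OF independent_cart_basis]) (auto simp: cart_basis_def e_def std_basis_def)
  have dimC: "vec.dim C = l"
    using C_span vec.dim_span_eq_card_independent[OF indep] card_image[OF inj_on_subset[OF inje]] cardI
    by simp
  define \<pi> where "\<pi> w = (\<Sum>j\<in>UNIV. if j \<in> J then w $ j *s e (\<sigma> j) else 0)" for w :: "'a ^ 'n"
  have \<pi>_comp: "\<pi> w $ i = (\<Sum>j\<in>UNIV. if j \<in> J then w $ j * e (\<sigma> j) $ i else 0)" for w i
    unfolding \<pi>_def sum_component by (intro sum.cong) auto
  have \<pi>C: "\<pi> w \<in> C" for w
    unfolding C_def mem_Collect_eq
  proof (intro allI impI)
    fix i assume "i \<notin> I"
    then show "\<pi> w $ i = 0" unfolding \<pi>_comp using sigI by (intro sum.neutral) (auto simp: e_comp)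
  qed
  have \<pi>U: "w - \<pi> w \<in> U" for w
  proof -
    have "w = (\<Sum>j\<in>UNIV. w $ j *s e j)" using basis_expansion[of w] unfolding e_def std_basis_def by simp
    then have "w - \<pi> w = (\<Sum>j\<in>UNIV. w $ j *s e j - (if j \<in> J then w $ j *s e (\<sigma> j) else 0))"
      unfolding \<pi>_def by (simp add: sum_subtractf)
    also have "\<dots> \<in> U"
    proof (rule vec.subspace_sum[OF sU])
      fix j :: 'n
      show "w $ j *s e j - (if j \<in> J then w $ j *s e (\<sigma> j) else 0) \<in> U"
      proof (cases "j \<in> J")
        case True
        then have "w $ j *s (e j - e (\<sigma> j)) \<in> U" using sigU vec.subspace_scale[OF sU] by blast
        then show ?thesis using True by (simp add: vector_ssub_ldistrib)
      next
        case False
        then show ?thesis using vec.subspace_scale[OF sU] by (simp add: J_def)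
      qed
    qed
    finally show ?thesis .
  qed
  have \<pi>wt: "card {i. \<pi> w $ i \<noteq> 0} \<le> card {j. w $ j \<noteq> 0}" for w
  proof -
    have "{i. \<pi> w $ i \<noteq> 0} \<subseteq> \<sigma> ` {j. w $ j \<noteq> 0}"
    proof
      fix i assume "i \<in> {i. \<pi> w $ i \<noteq> 0}"
      then have "(\<Sum>j\<in>UNIV. if j \<in> J then w $ j * e (\<sigma> j) $ i else 0) \<noteq> 0" using \<pi>_comp by simp
      then obtain j where "(if j \<in> J then w $ j * e (\<sigma> j) $ i else 0) \<noteq> 0"
        by (rule sum.not_neutral_contains_not_neutral)
      then have "w $ j \<noteq> 0" "\<sigma> j = i" by (auto simp: e_comp split: if_splits)
      then show "i \<in> \<sigma> ` {j. w $ j \<noteq> 0}" by blast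
    qed
    then have "card {i. \<pi> w $ i \<noteq> 0} \<le> card (\<sigma> ` {j. w $ j \<noteq> 0})" by (intro card_mono) auto
    also have "\<dots> \<le> card {j. w $ j \<noteq> 0}" by (rule card_image_le) simp
    finally show ?thesis .
  qed
  have sumUNIV: "{x + y |x y. x \<in> C \<and> y \<in> U} = UNIV"
  proof -
    have "w \<in> {x + y |x y. x \<in> C \<and> y \<in> U}" for w
    proof -
      have "w = \<pi> w + (w - \<pi> w)" by simp
      then show ?thesis using \<pi>C[of w] \<pi>U[of w] by blast
    qed
    then show ?thesis by blast
  qed
  have "vec.dim (C \<inter> U) = 0"
  proof -
    have cb: "card (cart_basis :: ('a ^ 'n) set) = CARD('n)" by (rule card_cart_basis)
    have "vec.dim (UNIV :: ('a ^ 'n) set) + vec.dim (C \<inter> U) = vec.dim C + vec.dim U"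
      using vec.dim_sums_Int[OF sC sU] sumUNIV by simp
    moreover have "vec.dim (UNIV :: ('a ^ 'n) set) = CARD('n)" using cb by simp
    ultimately show ?thesis using dimC assms(2) by linarith
  qed
  then have CU0: "C \<inter> U \<subseteq> {0}" by simp
  have K: "c = d" if "c \<in> C" "d \<in> C" "c - d \<in> U" for c d
  proof -
    have "c - d \<in> C" using that vec.subspace_diff[OF sC] by blast
    then show ?thesis using that CU0 by auto
  qed
  have \<pi>U': "\<pi> x - x \<in> U" for x
    using vec.subspace_neg[OF sU \<pi>U[of x]] by simp
  have cardC: "card C = CARD('a) ^ l"
  proof -
    define g where "g f = (\<chi> i. if i \<in> I then f i else (0::'a))" for f :: "'n \<Rightarrow> 'a"
    have img: "C = g ` (PiE I (\<lambda>_. UNIV))"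
    proof
      show "g ` (PiE I (\<lambda>_. UNIV)) \<subseteq> C" by (auto simp: C_def g_def)
      show "C \<subseteq> g ` (PiE I (\<lambda>_. UNIV))"
      proof
        fix x assume x: "x \<in> C"
        have "x = g (restrict (\<lambda>i. x $ i) I)"
          using x by (auto simp: g_def C_def vec_eq_iff)
        moreover have "restrict (\<lambda>i. x $ i) I \<in> PiE I (\<lambda>_. UNIV)" by simp
        ultimately show "x \<in> g ` (PiE I (\<lambda>_. UNIV))" by blast
      qed
    qed
    have inj: "inj_on g (PiE I (\<lambda>_. UNIV))"
    proof (rule inj_onI)
      fix f1 f2 assume f: "f1 \<in> PiE I (\<lambda>_. UNIV)" "f2 \<in> PiE I (\<lambda>_. UNIV)" "g f1 = g f2"
      have "f1 i = f2 i" if "i \<in> I" for i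
      proof -
        have "g f1 $ i = g f2 $ i" using f by simp
        then show ?thesis using that by (simp add: g_def)
      qed
      then show "f1 = f2" using f by (intro PiE_ext) auto
    qed
    have "card C = card (PiE I (\<lambda>_. (UNIV :: 'a set)))" unfolding img by (rule card_image[OF inj])
    also have "\<dots> = CARD('a) ^ card I" by (simp add: card_PiE)
    finally show ?thesis using cardI by simp
  qed
  have part: "card (C \<inter> P) = 1" if hP: "P \<in> coset_partition U" for P
  proof -
    obtain x where P: "P = coset x U" using hP unfolding coset_partition_def by blast
    have "C \<inter> P = {\<pi> x}"
    proof
      show "{\<pi> x} \<subseteq> C \<inter> P" using \<pi>C \<pi>U' mem_coset_iff[OF sU] P by auto
      show "C \<inter> P \<subseteq> {\<pi> x}"
      proof
        fix c assume c: "c \<in> C \<inter> P"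
        then have "c - x \<in> U" using mem_coset_iff[OF sU] P by auto
        then have "(c - x) - (\<pi> x - x) \<in> U" using vec.subspace_diff[OF sU] \<pi>U' by blast
        then have "c - \<pi> x \<in> U" by simp
        then show "c \<in> {\<pi> x}" using K[of c "\<pi> x"] c \<pi>C by auto
      qed
    qed
    then show ?thesis by simp
  qed
  have clique: "is_clique (partition_graph_adj (coset_partition U)) C"
    unfolding is_clique_def
  proof (intro ballI impI)
    fix u v assume u: "u \<in> C" and v: "v \<in> C" and uv: "u \<noteq> v"
    define P where "P = coset u U"
    define P' where "P' = coset v U"
    have PP: "P \<in> coset_partition U" "P' \<in> coset_partition U"
      unfolding P_def P'_def coset_partition_def by blast+
    have uP: "u \<in> P" and vP: "v \<in> P'"
      unfolding P_def P'_def using mem_coset_iff[OF sU] vec.subspace_0[OF sU] by auto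
    have neq: "P \<noteq> P'"
    proof
      assume "P = P'"
      then have "u - v \<in> U" using uP mem_coset_iff[OF sU] unfolding P'_def by auto
      then show False using K[OF u v] uv by simp
    qed
    have uvC: "u - v \<in> C" using vec.subspace_diff[OF sC u v] .
    have wt: "hamming x y = card {i. (x - y) $ i \<noteq> 0}" for x y :: "'a ^ 'n"
      unfolding hamming_def by simp
    have le: "hamming u v \<le> hamming x y" if "x \<in> P" "y \<in> P'" for x y
    proof -
      define w where "w = x - y"
      have "x - u \<in> U" "y - v \<in> U" using that mem_coset_iff[OF sU] unfolding P_def P'_def by auto
      then have "(x - u) - (y - v) \<in> U" using vec.subspace_diff[OF sU] by blast
      then have "w - (u - v) \<in> U" unfolding w_def by (simp add: algebra_simps)
      then have "(\<pi> w - w) + (w - (u - v)) \<in> U" using vec.subspace_add[OF sU] \<pi>U' by blast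
      moreover have "(\<pi> w - w) + (w - (u - v)) = \<pi> w - (u - v)" by simp
      ultimately have "\<pi> w - (u - v) \<in> U" by metis
      then have "\<pi> w = u - v" using K[OF \<pi>C uvC] by simp
      then show ?thesis using \<pi>wt[of w] unfolding wt w_def by simp
    qed
    have fin: "finite {hamming x y | x y. x \<in> P \<and> y \<in> P'}"
    proof -
      have "{hamming x y | x y. x \<in> P \<and> y \<in> P'} = (\<lambda>(x, y). hamming x y) ` (P \<times> P')" by auto
      then show ?thesis by simp
    qed
    have "block_dist P P' = hamming u v"
      unfolding block_dist_def
      by (rule Min_eqI[OF fin]) (use le uP vP in auto)
    then show "partition_graph_adj (coset_partition U) u v"
      unfolding partition_graph_adj_def using PP neq uP vP by metis
  qed
  show ?thesis using clique cardC part by blast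
qed

end
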